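(* Let $M$ be an odd prime, $p \in \mathbb{Z}_M^{\times}$, $q_1, q_2, q_3, q_4 \in \mathbb{Z}_M$, and let $K, C$ be positive integers with $\gcd(K, M) = 1$. Let $\varphi, \psi : \mathbb{Q} \to \mathbb{Z}$ satisfy $\varphi(x + C) = -\varphi(x)$ and $\psi(x + C) = -\psi(x)$ for all $x \in \frac{C}{K}\mathbb{Z}$. Identify each $x = \frac{j}{K}$ ($j \in \mathbb{Z}$) with $\bar{x} := jK^{-1} \in \mathbb{Z}_M$, and let $x \mapsto p^x$ be an assignment $\frac{1}{K}\mathbb{Z} \to \mathbb{Z}_M$ with $p^{x+a} = p^x p^a$ for all $x \in \frac1K\mathbb{Z}$ and integers $a \ge 0$. For $x \in \frac{1}{K}\mathbb{Z}$ with $\bar{x} \ne 0$ and $a, b \in \mathbb{Z}_M$ set \[ s_M(x; a, b) := \big(p^x + a\,\varphi(Cx) + b\,\psi(Cx)\big)\cdot \bar{x}^{-1} \in \mathbb{Z}_M . \] Let $t \in \frac{1}{K}\mathbb{Z}$ and nonnegative integers $u, v$ be such that $\bar t,\ \overline{t+2v+1},\ \overline{t+2u},\ \overline{t+2u+2v+1}$ are all nonzero in $\mathbb{Z}_M$, and put \[ s_0 = s_M(t; q_1,q_2),\ s_1 = s_M(t+2v+1; q_1,q_2),\ s_2 = s_M(t+2u; q_3,q_4),\ s_3 = s_M(t+2u+2v+1; q_3,q_4). \] Assume $2(s_1 p^{2u} - s_3) \not\equiv 0 \pmod M$. For $s^* \in \mathbb{Z}_M$ with $s_1 p^{2u} -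 s^* \ne 0$ define \[ v^*(s^* ) := \frac{ -s_0 p^{2u} \bar t - s_1 p^{2u}(\bar t+1) + s_2(\bar t+2u) + s^*(\bar t+2u+1) }{ 2(s_1 p^{2u} - s^* ) } \in \mathbb{Z}_M . \] Then $s_3$ is the only element $s^* \in \mathbb{Z}_M$ (with $s_1 p^{2u} - s^* \neq 0$) such that $v^*(s^* ) \equiv v \pmod M$.
   Context: All arithmetic is in $\mathbb{Z}_M$; $K^{-1}$ denotes the inverse of $K$ modulo $M$. The values $s_0,\dots,s_3$ are the evaluations used in the paper's symmetric invariant-based protocol (with $t$ a hidden evaluation index and $u,v$ session parameters), and $v^*(s^* )$ is the receiver's recovery formula for $v$ from a candidate third evaluation $s^*$. *)

theory Defs
  imports Main "HOL-Number_Theory.Number_Theory"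
begin

text \<open>Elements of Z_M are represented by integers (canonically in 0..M-1);
  x in (1/K)Z is a rational number, and its image in Z_M is x*K * K^{-1} mod M.\<close>

definition xbar :: "int \<Rightarrow> int \<Rightarrow> rat \<Rightarrow> int" where
  "xbar M K x = (\<lfloor>x * of_int K\<rfloor> * modular_inverse M K) mod M"

definition sM :: "int \<Rightarrow> int \<Rightarrow> int \<Rightarrow> (rat \<Rightarrow> int) \<Rightarrow> (rat \<Rightarrow> int) \<Rightarrow> (rat \<Rightarrow> int)
                  \<Rightarrow> int \<Rightarrow> int \<Rightarrow> rat \<Rightarrow> int" where
  "sM M K C P phi psi a b x =
     ((P x + a * phi (of_int C * x) + b * psi (of_int C * x)) * modular_inverse M (xbar M K x)) mod M"

definition vstar :: "int \<Rightarrow> int \<Rightarrow> nat \<Rightarrow> int \<Rightarrow> int \<Rightarrow> int \<Rightarrow> int \<Rightarrow> int \<Rightarrow> int" where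
  "vstar M p u tb s0 s1 s2 sstar =
     ((- s0 * p ^ (2*u) * tb - s1 * p ^ (2*u) * (tb + 1) + s2 * (tb + 2 * int u)
        + sstar * (tb + 2 * int u + 1))
      * modular_inverse M (2 * (s1 * p ^ (2*u) - sstar))) mod M"

end

theory Submission
  imports Defs
begin

lemma inv_mul:
  fixes M n :: int
  assumes "coprime n M"
  shows "M dvd (n * modular_inverse M n - 1)"
  using cong_modular_inverse1[OF assms] by (simp add: cong_iff_dvd_diff)

lemma xbar_shift:
  fixes M K j :: int and n :: nat
  assumes K: "K > 0" "gcd K M = 1"
  shows "M dvd (xbar M K (of_int j / of_int K + of_nat n) - (xbar M K (of_int j / of_int K) + int n))"
proof -
  have f1: "\<lfloor>(of_int j / of_int K + of_nat n) * (of_int K::rat)\<rfloor> = j + int n * K"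
  proof -
    have "(of_int j / of_int K + of_nat n) * (of_int K::rat) = of_int (j + int n * K)"
      using K by (simp add: field_simps)
    then show ?thesis by (metis floor_of_int)
  qed
  have f0: "\<lfloor>(of_int j / of_int K) * (of_int K::rat)\<rfloor> = j" using K by simp
  define I where "I = modular_inverse M K"
  have cp: "coprime K M" using K by (simp add: coprime_iff_gcd_eq_1)
  have d: "M dvd (K * I - 1)" unfolding I_def by (rule inv_mul[OF cp])
  have "xbar M K (of_int j / of_int K + of_nat n) - (xbar M K (of_int j / of_int K) + int n)
        = ((j + int n * K) * I) mod M - (j * I) mod M - int n"
    unfolding xbar_def f1 f0 I_def by simp
  moreover have "M dvd (((j + int n * K) * I) mod M - (j * I) mod M - int n)"
  proof -
    have "M dvd (((j + int n * K) * I) mod M - (j + int n * K) * I)"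
      using dvd_minus_mod[of M "(j + int n * K) * I"] by (metis dvd_minus_iff minus_diff_eq)
    moreover have "M dvd ((j * I) - (j * I) mod M)"
      by (rule dvd_minus_mod)
    moreover have "M dvd (int n * (K * I - 1))" using d by simp
    ultimately have "M dvd ((((j + int n * K) * I) mod M - (j + int n * K) * I) + ((j * I) - (j * I) mod M) + int n * (K * I - 1))"
      by (intro dvd_add)
    moreover have "(((j + int n * K) * I) mod M - (j + int n * K) * I) + ((j * I) - (j * I) mod M) + int n * (K * I - 1)
       = ((j + int n * K) * I) mod M - (j * I) mod M - int n"
      by (simp add: algebra_simps)
    ultimately show ?thesis by simp
  qed
  ultimately show ?thesis by (simp only:)
qed

lemma anti_shift:
  fixes C K j :: int and f :: "rat \<Rightarrow> int"
  assumes K: "K > 0"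
    and anti: "\<And>x. (\<exists>j::int. x = of_int C * of_int j / of_int K) \<Longrightarrow> f (x + of_int C) = - f x"
  shows "f (of_int C * (of_int j / of_int K + of_nat n)) = (-1) ^ n * f (of_int C * (of_int j / of_int K))"
proof (induction n)
  case 0
  then show ?case by simp
next
  case (Suc n)
  have g: "of_int C * (of_int j / of_int K + of_nat n) = of_int C * of_int (j + int n * K) / (of_int K :: rat)"
    using K by (simp add: field_simps)
  have e: "of_int C * (of_int j / of_int K + of_nat (Suc n)) = of_int C * (of_int j / of_int K + of_nat n) + (of_int C :: rat)"
    by (simp add: algebra_simps)
  have "f (of_int C * (of_int j / of_int K + of_nat (Suc n))) = - f (of_int C * (of_int j / of_int K + of_nat n))"
    unfolding e by (rule anti) (use g in blast)
  then show ?case using Suc by simp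
qed

lemma sM_prop:
  fixes M K C P phi psi a b x
  assumes "prime M" "\<not> M dvd xbar M K x"
  shows "M dvd (sM M K C P phi psi a b x * xbar M K x - (P x + a * phi (of_int C * x) + b * psi (of_int C * x)))"
proof -
  define Y where "Y = P x + a * phi (of_int C * x) + b * psi (of_int C * x)"
  define I where "I = modular_inverse M (xbar M K x)"
  have cp: "coprime (xbar M K x) M" using prime_imp_coprime[OF assms] by (simp add: coprime_commute)
  have d: "M dvd (xbar M K x * I - 1)" unfolding I_def by (rule inv_mul[OF cp])
  have s: "sM M K C P phi psi a b x = (Y * I) mod M" unfolding sM_def Y_def I_def by simp
  have "M dvd (((Y * I) mod M - Y * I) * xbar M K x + Y * (xbar M K x * I - 1))"
  proof -
    have "M dvd ((Y * I) mod M - Y * I)"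
      using dvd_minus_mod[of M "Y * I"] by (metis dvd_minus_iff minus_diff_eq)
    then show ?thesis using d by (intro dvd_add dvd_mult2 dvd_mult)
  qed
  moreover have "((Y * I) mod M - Y * I) * xbar M K x + Y * (xbar M K x * I - 1) = (Y * I) mod M * xbar M K x - Y"
    by (simp add: algebra_simps)
  ultimately show ?thesis unfolding s Y_def[symmetric] by simp
qed

lemma s_shift:
  fixes M K C p :: int and j :: int and n :: nat and P phi psi :: "rat \<Rightarrow> int"
  assumes M: "prime M" and K: "K > 0" "gcd K M = 1"
    and phi_anti: "\<And>x. (\<exists>j::int. x = of_int C * of_int j / of_int K) \<Longrightarrow> phi (x + of_int C) = - phi x"
    and psi_anti: "\<And>x. (\<exists>j::int. x = of_int C * of_int j / of_int K) \<Longrightarrow> psi (x + of_int C) = - psi x"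
    and P_mult: "\<And>x (a::nat). (\<exists>j::int. x = of_int j / of_int K) \<Longrightarrow> [P (x + of_nat a) = P x * p ^ a] (mod M)"
    and nz: "\<not> M dvd xbar M K (of_int j / of_int K + of_nat n)"
  shows "M dvd (sM M K C P phi psi a b (of_int j / of_int K + of_nat n) * (xbar M K (of_int j / of_int K) + int n)
     - (P (of_int j / of_int K) * p ^ n + (-1) ^ n * (a * phi (of_int C * (of_int j / of_int K)) + b * psi (of_int C * (of_int j / of_int K)))))"
proof -
  define t where "t = (of_int j / of_int K :: rat)"
  define s where "s = sM M K C P phi psi a b (t + of_nat n)"
  define xb' where "xb' = xbar M K (t + of_nat n)"
  define xb where "xb = xbar M K t"
  have d1: "M dvd (s * xb' - (P (t + of_nat n) + a * phi (of_int C * (t + of_nat n)) + b * psi (of_int C * (t + of_nat n))))"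
    unfolding s_def xb'_def by (rule sM_prop[OF M]) (use nz t_def in simp)
  have d2: "M dvd (xb' - (xb + int n))" unfolding xb'_def xb_def t_def by (rule xbar_shift[OF K])
  have d3: "M dvd (P (t + of_nat n) - P t * p ^ n)"
    using P_mult[of t n] unfolding t_def by (auto simp: cong_iff_dvd_diff)
  have e1: "phi (of_int C * (t + of_nat n)) = (-1)^n * phi (of_int C * t)"
    unfolding t_def by (rule anti_shift[where f=phi, OF K(1) phi_anti])
  have e2: "psi (of_int C * (t + of_nat n)) = (-1)^n * psi (of_int C * t)"
    unfolding t_def by (rule anti_shift[where f=psi, OF K(1) psi_anti])
  have "M dvd ((s * xb' - (P (t + of_nat n) + a * phi (of_int C * (t + of_nat n)) + b * psi (of_int C * (t + of_nat n))))
       - s * (xb' - (xb + int n)) + (P (t + of_nat n) - P t * p ^ n))"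
    using dvd_add[OF dvd_diff[OF d1 dvd_mult[OF d2, of s]] d3] .
  moreover have "(s * xb' - (P (t + of_nat n) + a * phi (of_int C * (t + of_nat n)) + b * psi (of_int C * (t + of_nat n))))
       - s * (xb' - (xb + int n)) + (P (t + of_nat n) - P t * p ^ n)
     = s * (xb + int n) - (P t * p ^ n + (-1) ^ n * (a * phi (of_int C * t) + b * psi (of_int C * t)))"
    unfolding e1 e2 by (simp add: algebra_simps)
  ultimately show ?thesis unfolding s_def xb_def t_def by simp
qed

lemma div_iff:
  fixes M N D v :: int
  assumes cp: "coprime D M" and M: "M > 1"
  shows "[(N * modular_inverse M D) mod M = v] (mod M) \<longleftrightarrow> M dvd (N - v * D)"
proof -
  define I where "I = modular_inverse M D"
  have d: "M dvd (D * I - 1)" unfolding I_def by (rule inv_mul[OF cp])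
  have c1: "[(N * I) mod M = N * I] (mod M)" by (simp add: cong_def)
  show ?thesis unfolding I_def[symmetric]
  proof
    assume "[(N * I) mod M = v] (mod M)"
    then have h1: "M dvd (N * I - v)" using c1 by (metis cong_iff_dvd_diff cong_sym cong_trans)
    then have "M dvd ((N * I - v) * D - N * (D * I - 1))" by (meson dvd_diff dvd_mult dvd_mult2 h1 d)
    moreover have "(N * I - v) * D - N * (D * I - 1) = N - v * D" by (simp add: algebra_simps)
    ultimately show "M dvd (N - v * D)" by simp
  next
    assume h: "M dvd (N - v * D)"
    have "M dvd ((N - v * D) * I + v * (D * I - 1))" using d h by (intro dvd_add dvd_mult2 dvd_mult)
    moreover have "(N - v * D) * I + v * (D * I - 1) = N * I - v" by (simp add: algebra_simps)
    ultimately have "[N * I = v] (mod M)" by (simp add: cong_iff_dvd_diff)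
    then show "[(N * I) mod M = v] (mod M)" using c1 by (metis cong_trans)
  qed
qed

theorem lemma1:
  fixes M K C p q1 q2 q3 q4 :: int
    and phi psi P :: "rat \<Rightarrow> int"
    and t :: rat and u v :: nat
  assumes M_prime: "prime M" and M_odd: "odd M"
    and p_unit: "coprime p M"
    and K_pos: "K > 0" and C_pos: "C > 0" and K_coprime: "gcd K M = 1"
    and phi_anti: "\<And>x. (\<exists>j::int. x = of_int C * of_int j / of_int K) \<Longrightarrow> phi (x + of_int C) = - phi x"
    and psi_anti: "\<And>x. (\<exists>j::int. x = of_int C * of_int j / of_int K) \<Longrightarrow> psi (x + of_int C) = - psi x"
    and P_mult: "\<And>x (a::nat). (\<exists>j::int. x = of_int j / of_int K) \<Longrightarrow> [P (x + of_nat a) = P x * p ^ a] (mod M)"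
    and t_grid: "\<exists>j::int. t = of_int j / of_int K"
    and nz0: "\<not> [xbar M K t = 0] (mod M)"
    and nz1: "\<not> [xbar M K (t + of_nat (2*v+1)) = 0] (mod M)"
    and nz2: "\<not> [xbar M K (t + of_nat (2*u)) = 0] (mod M)"
    and nz3: "\<not> [xbar M K (t + of_nat (2*u+2*v+1)) = 0] (mod M)"
    and s3_cond: "\<not> [2 * (sM M K C P phi psi q1 q2 (t + of_nat (2*v+1)) * p ^ (2*u)
                            - sM M K C P phi psi q3 q4 (t + of_nat (2*u+2*v+1))) = 0] (mod M)"
  shows "{s \<in> {0..<M}.
            \<not> [sM M K C P phi psi q1 q2 (t + of_nat (2*v+1)) * p ^ (2*u) = s] (mod M) \<and>
            [vstar M p u (xbar M K t)
               (sM M K C P phi psi q1 q2 t)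
               (sM M K C P phi psi q1 q2 (t + of_nat (2*v+1)))
               (sM M K C P phi psi q3 q4 (t + of_nat (2*u)))
               s = int v] (mod M)}
         = {sM M K C P phi psi q3 q4 (t + of_nat (2*u+2*v+1))}"
proof -
  obtain j where tj: "t = of_int j / of_int K" using t_grid by blast
  have M1: "M > 1" using M_prime prime_gt_1_int by blast
  define T where "T = xbar M K t"
  define X where "X = P t"
  define A where "A = phi (of_int C * t)"
  define B where "B = psi (of_int C * t)"
  define s0 where "s0 = sM M K C P phi psi q1 q2 t"
  define s1 where "s1 = sM M K C P phi psi q1 q2 (t + of_nat (2*v+1))"
  define s2 where "s2 = sM M K C P phi psi q3 q4 (t + of_nat (2*u))"
  define s3 where "s3 = sM M K C P phi psi q3 q4 (t + of_nat (2*u+2*v+1))"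
  define S where "S = s1 * p ^ (2*u)"
  note SS = s_shift[where phi=phi and psi=psi and P=P and C=C and p=p, OF M_prime K_pos K_coprime phi_anti psi_anti P_mult]
  have E0: "M dvd (s0 * T - (X + (q1 * A + q2 * B)))"
    using SS[of j 0 q1 q2] nz0 unfolding tj[symmetric] T_def X_def A_def B_def s0_def
    by (simp add: cong_0_iff)
  have E1: "M dvd (s1 * (T + int (2*v+1)) - (X * p ^ (2*v+1) + (-1) ^ (2*v+1) * (q1 * A + q2 * B)))"
    using SS[of j "2*v+1" q1 q2] nz1 unfolding tj[symmetric] T_def X_def A_def B_def s1_def
    by (simp add: cong_0_iff)
  have E2: "M dvd (s2 * (T + int (2*u)) - (X * p ^ (2*u) + (-1) ^ (2*u) * (q3 * A + q4 * B)))"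
    using SS[of j "2*u" q3 q4] nz2 unfolding tj[symmetric] T_def X_def A_def B_def s2_def
    by (simp add: cong_0_iff)
  have E3: "M dvd (s3 * (T + int (2*u+2*v+1)) - (X * p ^ (2*u+2*v+1) + (-1) ^ (2*u+2*v+1) * (q3 * A + q4 * B)))"
    using SS[of j "2*u+2*v+1" q3 q4] nz3 unfolding tj[symmetric] T_def X_def A_def B_def s3_def
    by (simp add: cong_0_iff)
  define N0 where "N0 = - s0 * p ^ (2*u) * T - s1 * p ^ (2*u) * (T + 1) + s2 * (T + 2 * int u)"
  define Z where "Z = N0 + s3 * (T + 2 * int u + 1) - int v * (2 * (S - s3))"
  have m1: "(-1::int) ^ (2*v+1) = -1" by simp
  have m2: "(-1::int) ^ (2*u) = 1" by simp
  have m3: "(-1::int) ^ (2*u+2*v+1) = -1" by simp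
  have pw: "p ^ (2*u+2*v+1) = p ^ (2*u) * p ^ (2*v+1)" by (simp add: power_add)
  have Zeq: "Z = (- (p ^ (2*u))) * (s0 * T - (X + (q1 * A + q2 * B)))
     + (- (p ^ (2*u))) * (s1 * (T + int (2*v+1)) - (X * p ^ (2*v+1) + (-1) ^ (2*v+1) * (q1 * A + q2 * B)))
     + (s2 * (T + int (2*u)) - (X * p ^ (2*u) + (-1) ^ (2*u) * (q3 * A + q4 * B)))
     + (s3 * (T + int (2*u+2*v+1)) - (X * p ^ (2*u+2*v+1) + (-1) ^ (2*u+2*v+1) * (q3 * A + q4 * B)))"
    unfolding m1 m2 m3 pw Z_def N0_def S_def by (simp add: algebra_simps)
  have MZ: "M dvd Z" unfolding Zeq
    using E0 E1 E2 E3 by (meson dvd_add dvd_mult)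
  have nz3': "\<not> M dvd (T + int (2*u+2*v+1))"
  proof
    assume h: "M dvd (T + int (2*u+2*v+1))"
    have "M dvd (xbar M K (t + of_nat (2*u+2*v+1)) - (T + int (2*u+2*v+1)))"
      unfolding T_def tj by (rule xbar_shift[OF K_pos K_coprime])
    then have "M dvd xbar M K (t + of_nat (2*u+2*v+1))" using h by (metis dvd_add diff_add_cancel)
    then show False using nz3 by (simp add: cong_0_iff)
  qed
  have M2: "\<not> M dvd 2"
  proof
    assume "M dvd 2"
    then have "M \<le> 2" by (simp add: zdvd_imp_le)
    then have "M = 2" using M1 by simp
    then show False using M_odd by simp
  qed
  have key: "\<And>s. \<not> [S = s] (mod M) \<Longrightarrow>
      [vstar M p u T s0 s1 s2 s = int v] (mod M) \<longleftrightarrow> M dvd (s - s3)"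
  proof -
    fix s assume ns: "\<not> [S = s] (mod M)"
    have "\<not> M dvd (S - s)" using ns by (simp add: cong_iff_dvd_diff)
    then have "\<not> M dvd (2 * (S - s))" using M2 M_prime
      by (metis prime_dvd_mult_iff)
    then have cp: "coprime (2 * (S - s)) M"
      using prime_imp_coprime[OF M_prime] coprime_commute by blast
    have "[vstar M p u T s0 s1 s2 s = int v] (mod M) \<longleftrightarrow>
          M dvd ((- s0 * p ^ (2*u) * T - s1 * p ^ (2*u) * (T + 1) + s2 * (T + 2 * int u)
        + s * (T + 2 * int u + 1)) - int v * (2 * (s1 * p ^ (2*u) - s)))"
      unfolding vstar_def by (rule div_iff[OF _ M1]) (use cp S_def in simp)
    also have "(- s0 * p ^ (2*u) * T - s1 * p ^ (2*u) * (T + 1) + s2 * (T + 2 * int u)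
        + s * (T + 2 * int u + 1)) - int v * (2 * (s1 * p ^ (2*u) - s))
        = Z + (s - s3) * (T + int (2*u+2*v+1))"
      unfolding Z_def N0_def S_def by (simp add: algebra_simps)
    also have "M dvd (Z + (s - s3) * (T + int (2*u+2*v+1))) \<longleftrightarrow> M dvd ((s - s3) * (T + int (2*u+2*v+1)))"
      using MZ by (simp add: dvd_add_right_iff)
    also have "\<dots> \<longleftrightarrow> M dvd (s - s3)" using nz3' M_prime by (simp add: prime_dvd_mult_iff)
    finally show "[vstar M p u T s0 s1 s2 s = int v] (mod M) \<longleftrightarrow> M dvd (s - s3)" .
  qed
  have s3r: "s3 \<in> {0..<M}" unfolding s3_def sM_def using M1 by simp
  have "\<not> M dvd (2 * (S - s3))" using s3_cond
    unfolding S_def s1_def s3_def by (metis cong_0_iff)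
  then have s3n: "\<not> [S = s3] (mod M)" by (metis cong_iff_dvd_diff dvd_mult)
  have main: "{s \<in> {0..<M}. \<not> [S = s] (mod M) \<and> [vstar M p u T s0 s1 s2 s = int v] (mod M)} = {s3}"
  proof (rule Set.set_eqI)
    fix x show "x \<in> {s \<in> {0..<M}. \<not> [S = s] (mod M) \<and> [vstar M p u T s0 s1 s2 s = int v] (mod M)} \<longleftrightarrow> x \<in> {s3}"
    proof
    fix s assume "s \<in> {s \<in> {0..<M}. \<not> [S = s] (mod M) \<and> [vstar M p u T s0 s1 s2 s = int v] (mod M)}"
    then have r: "s \<in> {0..<M}" and ns: "\<not> [S = s] (mod M)" and vv: "[vstar M p u T s0 s1 s2 s = int v] (mod M)"
      by auto
    have "M dvd (s - s3)" using key[OF ns] vv by simp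
    then have "[s = s3] (mod M)" by (simp add: cong_iff_dvd_diff)
    then have "s mod M = s3 mod M" by (simp add: cong_def)
    then have "s = s3" using r s3r by simp
    then show "s \<in> {s3}" by simp
  next
    fix s assume "s \<in> {s3}"
    then have "s = s3" by simp
    then show "s \<in> {s \<in> {0..<M}. \<not> [S = s] (mod M) \<and> [vstar M p u T s0 s1 s2 s = int v] (mod M)}"
      using s3r s3n key[OF s3n] by simp
  qed
  qed
  then show ?thesis unfolding T_def s0_def s1_def s2_def s3_def S_def .
qed

end
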